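(* The fully shifted sub-local transition function $\underline{\delta}:\mathrm{Sub}\to\mathrm{Conf}$ is the right Kan extension of the fully shifted local transition function $\overline{\delta}:\mathrm{Loc}\to\mathrm{Conf}$ along the inclusion $i:\mathrm{Loc}\to\mathrm{Sub}$. That is, $\underline{\delta}$ is monotonic, $\underline{\delta}\circ i\Rightarrow\overline{\delta}$, and for every monotonic $f:\mathrm{Sub}\to\mathrm{Conf}$ with $f\circ i\Rightarrow\overline{\delta}$ we have $f\Rightarrow\underline{\delta}$.
   Context: A cellular automaton is given by a group $G$, a neighborhood $N\subseteq G$ (not necessarily finite), a finite set of states $Q$ and $\delta:Q^N\to Q$. $\mathrm{Conf}$ is the set of partial functions $G\to Q$ with support $|c|$; $c\restriction S$ is restriction to $S\cap|c|$; $\mathrm{Conf}$ is partially ordered by $c\preceq c'$ iff for all $g\in|c|$, $g\in|c'|$ and $c(g)=c'(g)$. For $c\in\mathrm{Conf}$, $g\in G$, $c\blacktriangleleft g$ has support $\{h\mid g\cdot h\in|c|\}$ and $(c\blacktriangleleft g)(h)=c(g\cdot h)$. $g\cdot M=\{g\cdot m\mid m\in M\}$. $c_g=c\restriction(g\cdot N\cap|c|)$; $\det(c)=\{g\in G\mid \exists q\in Q\ \forall c'\in Q^{g\cdot N}:\ c'\restriction|c_g|=c_g\implies \delta(c'\blacktriangleleft g)=q\}$ and $q_{c,g}$ is the unique such $q$. $\mathrm{Loc}=\bigcup_{g\in G}(\{g\}\times Q^{g\cdot N})$ with the trivial order (equality); $\overline{\delta}(g,c)$ is the configuration with support $\{g\}$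 and value $\delta(c\blacktriangleleft g)$. $\mathrm{Sub}=\bigcup_{g\in G,\,M\subseteq N}(\{g\}\times Q^{g\cdot M})$ ordered by $(g,c)\preceq(g',c')$ iff $g=g'$ and $c\preceq c'$; $\mathrm{Loc}\subseteq\mathrm{Sub}$. $\underline{\delta}(g,c)$ is the configuration with support $\{g\}\cap\det(c)$ and, if $g\in\det(c)$, value $q_{c,g}$. For posets $X,Y$, $f:X\to Y$ is monotonic if $x\preceq x'\Rightarrow f(x)\preceq f(x')$; for monotonic $f,f'$, $f\Rightarrow f'$ iff $f(x)\preceq f'(x)$ for all $x$. Given posets $A,B,C$ and monotonic $i:A\to B$, $f:A\to C$, a monotonic $g:B\to C$ is the right Kan extension of $f$ along $i$ if it is the $\Rightarrow$-maximum of $\{h:B\to C\text{ monotonic}\mid h\circ i\Rightarrow f\}$. *)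

theory Defs
  imports Main
begin

text \<open>Group G is a type of class group_add (group operation written +, possibly
non-commutative). Configurations are partial maps 'g \<rightharpoonup> 'q; support = dom.
Q^M is the set of partial maps with domain exactly M.  The local rule
delta is a function on configurations; only its values on Q^N matter.\<close>

definition conf_le :: "('g \<rightharpoonup> 'q) \<Rightarrow> ('g \<rightharpoonup> 'q) \<Rightarrow> bool" where
  "conf_le c c' \<longleftrightarrow> (\<forall>g\<in>dom c. g \<in> dom c' \<and> c g = c' g)"

definition shift :: "('g::group_add \<rightharpoonup> 'q) \<Rightarrow> 'g \<Rightarrow> ('g \<rightharpoonup> 'q)" where
  "shift c g = (\<lambda>h. c (g + h))"

definition lmult :: "'g::group_add \<Rightarrow> 'g set \<Rightarrow> 'g set" where
  "lmult g M = {g + m | m. m \<in> M}"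

definition confs_on :: "'g set \<Rightarrow> ('g \<rightharpoonup> 'q) set" where
  "confs_on M = {c. dom c = M}"

definition restr :: "('g \<rightharpoonup> 'q) \<Rightarrow> 'g set \<Rightarrow> ('g \<rightharpoonup> 'q)" where
  "restr c S = c |` S"

definition cg :: "'g::group_add set \<Rightarrow> ('g \<rightharpoonup> 'q) \<Rightarrow> 'g \<Rightarrow> ('g \<rightharpoonup> 'q)" where
  "cg N c g = restr c (lmult g N \<inter> dom c)"

definition det_at :: "'g::group_add set \<Rightarrow> (('g \<rightharpoonup> 'q) \<Rightarrow> 'q) \<Rightarrow> ('g \<rightharpoonup> 'q) \<Rightarrow> 'g \<Rightarrow> 'q \<Rightarrow> bool" where
  "det_at N \<delta> c g q \<longleftrightarrow>
     (\<forall>c'\<in>confs_on (lmult g N). restr c' (dom (cg N c g)) = cg N c g \<longrightarrow> \<delta> (shift c' g) = q)"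

definition det :: "'g::group_add set \<Rightarrow> (('g \<rightharpoonup> 'q) \<Rightarrow> 'q) \<Rightarrow> ('g \<rightharpoonup> 'q) \<Rightarrow> 'g set" where
  "det N \<delta> c = {g. \<exists>q. det_at N \<delta> c g q}"

definition qcg :: "'g::group_add set \<Rightarrow> (('g \<rightharpoonup> 'q) \<Rightarrow> 'q) \<Rightarrow> ('g \<rightharpoonup> 'q) \<Rightarrow> 'g \<Rightarrow> 'q" where
  "qcg N \<delta> c g = (THE q. det_at N \<delta> c g q)"

definition Loc :: "'g::group_add set \<Rightarrow> ('g \<times> ('g \<rightharpoonup> 'q)) set" where
  "Loc N = {(g, c). c \<in> confs_on (lmult g N)}"

definition Sub :: "'g::group_add set \<Rightarrow> ('g \<times> ('g \<rightharpoonup> 'q)) set" where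
  "Sub N = {(g, c). \<exists>M\<subseteq>N. c \<in> confs_on (lmult g M)}"

definition loc_le :: "('g \<times> ('g \<rightharpoonup> 'q)) \<Rightarrow> ('g \<times> ('g \<rightharpoonup> 'q)) \<Rightarrow> bool" where
  "loc_le x y \<longleftrightarrow> x = y"

definition sub_le :: "('g \<times> ('g \<rightharpoonup> 'q)) \<Rightarrow> ('g \<times> ('g \<rightharpoonup> 'q)) \<Rightarrow> bool" where
  "sub_le x y \<longleftrightarrow> fst x = fst y \<and> conf_le (snd x) (snd y)"

definition delta_bar :: "(('g::group_add \<rightharpoonup> 'q) \<Rightarrow> 'q) \<Rightarrow> ('g \<times> ('g \<rightharpoonup> 'q)) \<Rightarrow> ('g \<rightharpoonup> 'q)" where
  "delta_bar \<delta> x = [fst x \<mapsto> \<delta> (shift (snd x) (fst x))]"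

definition delta_under :: "'g::group_add set \<Rightarrow> (('g \<rightharpoonup> 'q) \<Rightarrow> 'q) \<Rightarrow> ('g \<times> ('g \<rightharpoonup> 'q)) \<Rightarrow> ('g \<rightharpoonup> 'q)" where
  "delta_under N \<delta> x =
     (if fst x \<in> det N \<delta> (snd x) then [fst x \<mapsto> qcg N \<delta> (snd x) (fst x)] else Map.empty)"

definition nat_le :: "'a set \<Rightarrow> ('c \<Rightarrow> 'c \<Rightarrow> bool) \<Rightarrow> ('a \<Rightarrow> 'c) \<Rightarrow> ('a \<Rightarrow> 'c) \<Rightarrow> bool" where
  "nat_le X ordC f f' \<longleftrightarrow> (\<forall>x\<in>X. ordC (f x) (f' x))"

text \<open>Right Kan extension of f : A \<rightarrow> C along i : A \<rightarrow> B (posets given by carriers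
and orders; C is the whole type).\<close>
definition right_kan_ext ::
  "'a set \<Rightarrow> ('a \<Rightarrow> 'a \<Rightarrow> bool) \<Rightarrow> 'b set \<Rightarrow> ('b \<Rightarrow> 'b \<Rightarrow> bool) \<Rightarrow> ('c \<Rightarrow> 'c \<Rightarrow> bool)
   \<Rightarrow> ('a \<Rightarrow> 'b) \<Rightarrow> ('a \<Rightarrow> 'c) \<Rightarrow> ('b \<Rightarrow> 'c) \<Rightarrow> bool" where
  "right_kan_ext A ordA B ordB ordC i f g \<longleftrightarrow>
     i ` A \<subseteq> B \<and> monotone_on A ordA ordB i \<and> monotone_on A ordA ordC f \<and>
     monotone_on B ordB ordC g \<and> nat_le A ordC (g \<circ> i) f \<and>
     (\<forall>h. monotone_on B ordB ordC h \<and> nat_le A ordC (h \<circ> i) f \<longrightarrow> nat_le B ordC h g)"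

end

theory Submission
  imports Defs
begin

lemma sub_dom: "(g, c) \<in> Sub N \<Longrightarrow> dom c \<subseteq> lmult g N"
  unfolding Sub_def confs_on_def lmult_def by auto blast

lemma cg_eq: "dom c \<subseteq> lmult g N \<Longrightarrow> cg N c g = c"
  unfolding cg_def restr_def
proof (rule ext)
  fix x assume a: "dom c \<subseteq> lmult g N"
  show "(c |` (lmult g N \<inter> dom c)) x = c x"
  proof (cases "x \<in> dom c")
    case True then show ?thesis using a by (auto simp: restrict_map_def)
  next
    case False then show ?thesis by (simp add: restrict_map_def domIff)
  qed
qed

lemma le_restr: "conf_le c c'' \<longleftrightarrow> c'' |` dom c = c"
  unfolding conf_le_def
proof
  assume h: "\<forall>g\<in>dom c. g \<in> dom c'' \<and> c g = c'' g"
  show "c'' |` dom c = c"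
  proof
    fix x show "(c'' |` dom c) x = c x"
    proof (cases "x \<in> dom c")
      case True then show ?thesis using h by simp
    next
      case False then have "c x = None" by blast
      then show ?thesis using False by simp
    qed
  qed
next
  assume h: "c'' |` dom c = c"
  show "\<forall>g\<in>dom c. g \<in> dom c'' \<and> c g = c'' g"
  proof
    fix g assume g: "g \<in> dom c"
    have "(c'' |` dom c) g = c'' g" using g by simp
    then have "c g = c'' g" using h by simp
    then show "g \<in> dom c'' \<and> c g = c'' g" using g by (metis domIff)
  qed
qed

lemma ext_exists: "dom c \<subseteq> S \<Longrightarrow> \<exists>c''. dom c'' = S \<and> conf_le c c''"
proof -
  assume a: "dom c \<subseteq> S"
  define c'' where "c'' = (\<lambda>h. if h \<in> dom c then c h else if h \<in> S then Some undefined else None)"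
  have "dom c'' = S"
  proof (rule set_eqI)
    fix x show "x \<in> dom c'' \<longleftrightarrow> x \<in> S"
      using a unfolding c''_def by (cases "x \<in> dom c") (auto split: if_splits)
  qed
  moreover have "conf_le c c''" unfolding conf_le_def c''_def by auto
  ultimately show ?thesis by blast
qed

lemma det_at_iff: "dom c \<subseteq> lmult g N \<Longrightarrow>
   det_at N \<delta> c g q \<longleftrightarrow> (\<forall>c''. dom c'' = lmult g N \<and> conf_le c c'' \<longrightarrow> \<delta> (shift c'' g) = q)"
proof -
  assume a: "dom c \<subseteq> lmult g N"
  have e: "cg N c g = c" using cg_eq[OF a] .
  show ?thesis unfolding det_at_def e confs_on_def restr_def le_restr by blast
qed

lemma det_unique: "dom c \<subseteq> lmult g N \<Longrightarrow> det_at N \<delta> c g q \<Longrightarrow> det_at N \<delta> c g q' \<Longrightarrow> q = q'"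
proof -
  assume a: "dom c \<subseteq> lmult g N" "det_at N \<delta> c g q" "det_at N \<delta> c g q'"
  obtain e where e: "dom e = lmult g N" "conf_le c e" using ext_exists[OF a(1)] by blast
  have "\<delta> (shift e g) = q" using a(2) e unfolding det_at_iff[OF a(1)] by blast
  moreover have "\<delta> (shift e g) = q'" using a(3) e unfolding det_at_iff[OF a(1)] by blast
  ultimately show ?thesis by simp
qed

lemma qcg_eq: "dom c \<subseteq> lmult g N \<Longrightarrow> det_at N \<delta> c g q \<Longrightarrow> qcg N \<delta> c g = q"
  unfolding qcg_def by (rule the_equality) (auto intro: det_unique)

lemma conf_le_refl: "conf_le c c" unfolding conf_le_def by auto

lemma conf_le_trans: "conf_le a b \<Longrightarrow> conf_le b c \<Longrightarrow> conf_le a c"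
  unfolding conf_le_def by auto

lemma du_eq: "dom c \<subseteq> lmult g N \<Longrightarrow> det_at N \<delta> c g q \<Longrightarrow> delta_under N \<delta> (g, c) = [g \<mapsto> q]"
  unfolding delta_under_def det_def using qcg_eq[of c g N \<delta> q] by auto

theorem mainTheorem15:
  fixes N :: "'g::group_add set" and \<delta> :: "('g \<rightharpoonup> 'q::finite) \<Rightarrow> 'q"
  shows "right_kan_ext (Loc N) loc_le (Sub N) sub_le conf_le id (delta_bar \<delta>) (delta_under N \<delta>)"
  unfolding right_kan_ext_def
proof (intro conjI allI impI)
  show "id ` Loc N \<subseteq> Sub N" unfolding Loc_def Sub_def by auto
  show "monotone_on (Loc N) loc_le sub_le id"
    unfolding monotone_on_def loc_le_def sub_le_def by (auto simp: conf_le_refl)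
  show "monotone_on (Loc N) loc_le conf_le (delta_bar \<delta>)"
    unfolding monotone_on_def loc_le_def by (auto simp: conf_le_refl)
  show "monotone_on (Sub N) sub_le conf_le (delta_under N \<delta>)"
    unfolding monotone_on_def
  proof (intro ballI impI)
    fix x y :: "'g \<times> ('g \<rightharpoonup> 'q)" assume x: "x \<in> Sub N" and y: "y \<in> Sub N" and le: "sub_le x y"
    obtain g c where xe: "x = (g, c)" by fastforce
    obtain c' where ye: "y = (g, c')" using le xe unfolding sub_le_def by (metis prod.collapse fst_conv)
    have cc: "conf_le c c'" using le xe ye unfolding sub_le_def by simp
    have dc: "dom c \<subseteq> lmult g N" using x xe sub_dom by blast
    have dc': "dom c' \<subseteq> lmult g N" using y ye sub_dom by blast
    show "conf_le (delta_under N \<delta> x) (delta_under N \<delta> y)"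
    proof (cases "g \<in> det N \<delta> c")
      case True
      then obtain q where q: "det_at N \<delta> c g q" unfolding det_def by blast
      have q': "det_at N \<delta> c' g q"
        unfolding det_at_iff[OF dc']
      proof (intro allI impI)
        fix c'' assume h: "dom c'' = lmult g N \<and> conf_le c' c''"
        then have "conf_le c c''" using cc conf_le_trans by blast
        then show "\<delta> (shift c'' g) = q" using h q unfolding det_at_iff[OF dc] by blast
      qed
      show ?thesis using du_eq[OF dc q] du_eq[OF dc' q'] xe ye conf_le_refl by simp
    next
      case False
      then show ?thesis using xe unfolding delta_under_def conf_le_def by simp
    qed
  qed
  show "nat_le (Loc N) conf_le (delta_under N \<delta> \<circ> id) (delta_bar \<delta>)"
    unfolding nat_le_def
  proof
    fix x :: "'g \<times> ('g \<rightharpoonup> 'q)" assume x: "x \<in> Loc N"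
    obtain g c where xe: "x = (g, c)" by fastforce
    have dc: "dom c = lmult g N" using x xe unfolding Loc_def confs_on_def by auto
    have "det_at N \<delta> c g (\<delta> (shift c g))"
    proof -
      have "\<And>c''. dom c'' = lmult g N \<Longrightarrow> conf_le c c'' \<Longrightarrow> c'' = c"
        using dc unfolding conf_le_def by (rule_tac ext) (metis domIff)
      then show ?thesis using dc det_at_iff by (metis order_refl)
    qed
    then show "conf_le ((delta_under N \<delta> \<circ> id) x) (delta_bar \<delta> x)"
      using du_eq[of c g N \<delta>] dc xe by (simp add: delta_bar_def conf_le_refl)
  qed
next
  fix h :: "'g \<times> ('g \<rightharpoonup> 'q) \<Rightarrow> ('g \<rightharpoonup> 'q)"
  assume a: "monotone_on (Sub N) sub_le conf_le h \<and> nat_le (Loc N) conf_le (h \<circ> id) (delta_bar \<delta>)"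
  show "nat_le (Sub N) conf_le h (delta_under N \<delta>)"
    unfolding nat_le_def
  proof
    fix x :: "'g \<times> ('g \<rightharpoonup> 'q)" assume x: "x \<in> Sub N"
    obtain g c where xe: "x = (g, c)" by fastforce
    have dc: "dom c \<subseteq> lmult g N" using x xe sub_dom by blast
    have key: "conf_le (h (g, c)) [g \<mapsto> \<delta> (shift c'' g)]"
      if "dom c'' = lmult g N" "conf_le c c''" for c''
    proof -
      have l: "(g, c'') \<in> Loc N" using that unfolding Loc_def confs_on_def by auto
      then have s: "(g, c'') \<in> Sub N" unfolding Loc_def Sub_def by auto
      have "conf_le (h (g, c)) (h (g, c''))"
        using a x xe s that unfolding monotone_on_def sub_le_def by auto
      moreover have "conf_le (h (g, c'')) (delta_bar \<delta> (g, c''))"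
        using a l unfolding nat_le_def by auto
      ultimately show ?thesis using conf_le_trans by (simp add: delta_bar_def)
    qed
    obtain e where e: "dom e = lmult g N" "conf_le c e" using ext_exists[OF dc] by blast
    have hsub: "dom (h (g, c)) \<subseteq> {g}" using key[OF e] unfolding conf_le_def by auto
    show "conf_le (h x) (delta_under N \<delta> x)"
    proof (cases "g \<in> dom (h (g, c))")
      case False
      then have "dom (h (g, c)) = {}" using hsub by blast
      then show ?thesis using xe unfolding conf_le_def by simp
    next
      case True
      then obtain q where q: "h (g, c) g = Some q" by blast
      have "det_at N \<delta> c g q"
        unfolding det_at_iff[OF dc]
      proof (intro allI impI)
        fix c'' assume "dom c'' = lmult g N \<and> conf_le c c''"
        then have "conf_le (h (g, c)) [g \<mapsto> \<delta> (shift c'' g)]" using key by blast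
        then show "\<delta> (shift c'' g) = q" using q True unfolding conf_le_def by auto
      qed
      then have du: "delta_under N \<delta> (g, c) = [g \<mapsto> q]" by (rule du_eq[OF dc])
      have "\<forall>k\<in>dom (h (g, c)). k \<in> dom [g \<mapsto> q] \<and> h (g, c) k = [g \<mapsto> q] k"
      proof
        fix k assume "k \<in> dom (h (g, c))"
        then have "k = g" using hsub by blast
        then show "k \<in> dom [g \<mapsto> q] \<and> h (g, c) k = [g \<mapsto> q] k" using q by simp
      qed
      then show ?thesis using xe du unfolding conf_le_def by simp
    qed
  qed
qed

end
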